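(* For $h_1,h_2\in\mathbb{R}$ let $S_{h_1,h_2}:=\{(x,y)\in\mathbb{R}^2:x\le h_1,\ y\le h_2,\ x^2+y^2\le1\}$, $C_0(h_1,h_2):=\iint_{S_{h_1,h_2}}dx\,dy$ and $C_1(h_1,h_2):=\iint_{S_{h_1,h_2}}\sqrt{x^2+y^2}\,dx\,dy$. Then for each $i\in\{0,1\}$ and all $h_1,h_2\in\mathbb{R}$: \[C_i(h_1,h_2)=\begin{cases}0,& h_1^2+h_2^2>1,\ h_1\le0,\ h_2\le0,\\ B_i(h_2),& h_1^2+h_2^2>1,\ h_1>0,\ h_2\le0,\\ B_i(h_1),& h_1^2+h_2^2>1,\ h_1\le0,\ h_2>0,\\ B_i(h_1)+B_i(h_2)-\frac{3-i}{3}\pi,& h_1^2+h_2^2>1,\ h_1>0,\ h_2>0,\\ \frac{3-i}{6}\left(\frac\pi2+\arcsin h_1+\arcsin h_2\right)+A_i\left(h_1,\sqrt{1-h_1^2}\right)\\ \quad+A_i\left(h_2,\sqrt{1-h_2^2}\right)+A_i(h_1,h_2)+A_i(h_2,h_1),& h_1^2+h_2^2\le1.\end{cases}\]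
   Context: Define $A_0,A_1:\mathbb{R}^2\to\mathbb{R}$ by $A_0(a,b):=\int_0^a\int_0^{bx/a}dy\,dx$ and $A_1(a,b):=\int_0^a\int_0^{bx/a}\sqrt{x^2+y^2}\,dy\,dx$ for $a\ne0$, and $A_0(0,b)=A_1(0,b):=0$ (integrals oriented/signed). For $h\in\mathbb{R}$ let $S_h:=\{(x,y):x\le h,\ x^2+y^2\le1\}$, $B_0(h):=\iint_{S_h}dx\,dy$, $B_1(h):=\iint_{S_h}\sqrt{x^2+y^2}\,dx\,dy$. *)

theory Defs
  imports "HOL-Analysis.Analysis"
begin

definition oint :: "real \<Rightarrow> real \<Rightarrow> (real \<Rightarrow> real) \<Rightarrow> real" where
  "oint a b f = (if a \<le> b then integral {a..b} f else - integral {b..a} f)"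

definition wt :: "nat \<Rightarrow> real \<Rightarrow> real \<Rightarrow> real" where
  "wt i x y = (if i = 0 then 1 else sqrt (x\<^sup>2 + y\<^sup>2))"

definition A :: "nat \<Rightarrow> real \<Rightarrow> real \<Rightarrow> real" where
  "A i a b = (if a = 0 then 0 else oint 0 a (\<lambda>x. oint 0 (b * x / a) (\<lambda>y. wt i x y)))"

definition S1 :: "real \<Rightarrow> (real \<times> real) set" where
  "S1 h = {(x, y). x \<le> h \<and> x\<^sup>2 + y\<^sup>2 \<le> 1}"

definition B :: "nat \<Rightarrow> real \<Rightarrow> real" where
  "B i h = integral (S1 h) (\<lambda>(x, y). wt i x y)"

definition S2 :: "real \<Rightarrow> real \<Rightarrow> (real \<times> real) set" where
  "S2 h1 h2 = {(x, y). x \<le> h1 \<and> y \<le> h2 \<and> x\<^sup>2 + y\<^sup>2 \<le> 1}"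

definition C :: "nat \<Rightarrow> real \<Rightarrow> real \<Rightarrow> real" where
  "C i h1 h2 = integral (S2 h1 h2) (\<lambda>(x, y). wt i x y)"

end

theory Submission
  imports Defs
begin
lemma fubini_box:
  fixes f :: "real \<times> real \<Rightarrow> real"
  assumes meas[measurable]: "f \<in> borel_measurable borel" and bnd: "\<And>z. \<bar>f z\<bar> \<le> M"
    and supp: "\<And>x y. f (x,y) \<noteq> 0 \<Longrightarrow> x \<in> {-1..1} \<and> y \<in> {-1..1}"
  shows "integral UNIV f = integral UNIV (\<lambda>x. integral UNIV (\<lambda>y. f (x,y)))"
    and "integral UNIV f = integral UNIV (\<lambda>y. integral UNIV (\<lambda>x. f (x,y)))"
    and "(\<lambda>x. integral UNIV (\<lambda>y. f (x,y))) integrable_on UNIV"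
proof -
  have sec1: "integrable lborel (\<lambda>y. f (x,y))" for x
    by (rule integrableI_bounded_set[where A="{-1..1}" and B=M]) (use supp in \<open>force simp: bnd intro!: AE_I2\<close>)+
  have sec2: "integrable lborel (\<lambda>x. f (x,y))" for y
    by (rule integrableI_bounded_set[where A="{-1..1}" and B=M]) (use supp in \<open>force simp: bnd intro!: AE_I2\<close>)+
  have int2: "integrable lborel f"
    apply (rule integrableI_bounded_set[where A="{-1..1}\<times>{-1..1}" and B=M])
    using bnd supp emeasure_bounded_finite[of "{-1..1::real}\<times>{-1..1::real}"]
    by (auto intro!: borel_closed closed_Times simp: bounded_Times)
  then have intp: "integrable (lborel \<Otimes>\<^sub>M lborel) (\<lambda>(x,y). f (x,y))"
    by (simp add: lborel_prod)
  have "integral UNIV f = (\<integral>z. f z \<partial>lborel)" by (rule integral_lborel[OF int2])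
  also have "\<dots> = integral\<^sup>L (lborel \<Otimes>\<^sub>M lborel) (\<lambda>(x,y). f (x,y))" by (simp add: lborel_prod)
  finally have e: "integral UNIV f = integral\<^sup>L (lborel \<Otimes>\<^sub>M lborel) (\<lambda>(x,y). f (x,y))" .
  have "(\<integral>x. (\<integral>y. f (x,y) \<partial>lborel) \<partial>lborel) = integral\<^sup>L (lborel \<Otimes>\<^sub>M lborel) (\<lambda>(x,y). f (x,y))"
    by (rule lborel_pair.integral_fst[OF intp])
  moreover have "integrable lborel (\<lambda>x. \<integral>y. f (x,y) \<partial>lborel)"
    by (rule lborel_pair.integrable_fst[OF intp])
  ultimately show "integral UNIV f = integral UNIV (\<lambda>x. integral UNIV (\<lambda>y. f (x,y)))"
    using e by (simp add: integral_lborel sec1)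
  have "integrable lborel (\<lambda>x. \<integral>y. f (x,y) \<partial>lborel)"
    by (rule lborel_pair.integrable_fst[OF intp])
  then have "(\<lambda>x. \<integral>y. f (x,y) \<partial>lborel) integrable_on UNIV" by (rule integrable_on_lborel)
  then show "(\<lambda>x. integral UNIV (\<lambda>y. f (x,y))) integrable_on UNIV"
    by (simp add: integral_lborel sec1)
  have "(\<integral>y. (\<integral>x. f (x,y) \<partial>lborel) \<partial>lborel) = integral\<^sup>L (lborel \<Otimes>\<^sub>M lborel) (\<lambda>(x,y). f (x,y))"
    by (rule lborel_pair.integral_snd[OF intp])
  moreover have "integrable lborel (\<lambda>y. \<integral>x. f (x,y) \<partial>lborel)"
    by (rule lborel_pair.integrable_snd[OF intp])
  ultimately show "integral UNIV f = integral UNIV (\<lambda>y. integral UNIV (\<lambda>x. f (x,y)))"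
    using e by (simp add: integral_lborel sec2)
qed

definition sq :: "real \<Rightarrow> real" where "sq x = sqrt (1 - x\<^sup>2)"

definition G :: "nat \<Rightarrow> real \<Rightarrow> real \<Rightarrow> real" where
  "G i a b = integral {-1..min a 1} (\<lambda>x. integral {-sq x..min b (sq x)} (\<lambda>y. wt i x y))"

lemma wt_sym: "wt i x y = wt i y x"
  by (simp add: wt_def add.commute)

lemma disk_iff:
  assumes "-1 \<le> x" "x \<le> 1"
  shows "(x\<^sup>2 + y\<^sup>2 \<le> 1) \<longleftrightarrow> (-sq x \<le> y \<and> y \<le> sq x)"
proof -
  have "(x\<^sup>2 + y\<^sup>2 \<le> 1) \<longleftrightarrow> y\<^sup>2 \<le> 1 - x\<^sup>2" by auto
  also have "\<dots> \<longleftrightarrow> sqrt (y\<^sup>2) \<le> sqrt (1 - x\<^sup>2)"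
    by (simp only: real_sqrt_le_iff)
  also have "\<dots> \<longleftrightarrow> \<bar>y\<bar> \<le> sq x" unfolding sq_def by simp
  finally show ?thesis by auto
qed

lemma disk_bound: "x\<^sup>2 + y\<^sup>2 \<le> (1::real) \<Longrightarrow> -1 \<le> x \<and> x \<le> 1"
proof -
  assume a: "x\<^sup>2 + y\<^sup>2 \<le> 1"
  have "sqrt (x\<^sup>2) \<le> sqrt 1" using a by (simp only: real_sqrt_le_iff) (smt (verit) zero_le_power2)
  then show ?thesis by (simp add: abs_le_iff)
qed

lemma C_G:
  shows "C i h1 h2 = G i h1 h2" and "C i h1 h2 = G i h2 h1"
    and "(\<lambda>x. integral {-sq x..min h2 (sq x)} (\<lambda>y. wt i x y)) integrable_on {-1..min h1 1}"
proof -
  define f where "f = (\<lambda>(x::real,y::real). if x \<le> h1 \<and> y \<le> h2 \<and> x\<^sup>2 + y\<^sup>2 \<le> 1 then wt i x y else 0)"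
  have C1: "C i h1 h2 = integral UNIV f"
    unfolding C_def f_def S2_def
    by (subst integral_restrict_UNIV[symmetric]) (rule arg_cong[where f="integral UNIV"], auto simp: fun_eq_iff)
  have meas: "f \<in> borel_measurable borel"
  proof -
    define K where "K = {z::real\<times>real. fst z \<le> h1 \<and> snd z \<le> h2 \<and> (fst z)\<^sup>2 + (snd z)\<^sup>2 \<le> 1}"
    have K: "closed K" unfolding K_def
      by (intro closed_Collect_conj closed_Collect_le continuous_intros)
    have cont: "continuous_on UNIV (\<lambda>z::real\<times>real. wt i (fst z) (snd z))"
      unfolding wt_def by (cases "i=0") (auto intro!: continuous_intros)
    have "f = (\<lambda>z. indicator K z * wt i (fst z) (snd z))"
      by (auto simp: f_def K_def fun_eq_iff indicator_def)
    then show ?thesis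
      using borel_measurable_times[OF borel_measurable_indicator[OF borel_closed[OF K]] borel_measurable_continuous_onI[OF cont]]
      by simp
  qed
  have bnd: "\<bar>f z\<bar> \<le> 1" for z
    by (auto simp: f_def wt_def split: prod.splits)
  have supp: "f (x,y) \<noteq> 0 \<Longrightarrow> x \<in> {-1..1} \<and> y \<in> {-1..1}" for x y
    using disk_bound[of x y] disk_bound[of y x] by (auto simp: f_def add.commute split: if_splits)
  have supp': "f (x,y) \<noteq> 0 \<Longrightarrow> x \<le> h1 \<and> y \<le> h2" for x y
    by (auto simp: f_def split: if_splits)
  have supp': "f (x,y) \<noteq> 0 \<Longrightarrow> x \<le> h1 \<and> y \<le> h2" for x y
    by (auto simp: f_def split: if_splits)
  have sec1: "integral UNIV (\<lambda>y. f (x,y)) = (if x \<in> {-1..min h1 1} then integral {-sq x..min h2 (sq x)} (\<lambda>y. wt i x y) else 0)" for x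
  proof (cases "x \<in> {-1..min h1 1}")
    case True
    then have eq: "(\<lambda>y. f (x,y)) = (\<lambda>y. if y \<in> {-sq x..min h2 (sq x)} then wt i x y else 0)"
      using disk_iff[of x] by (auto simp: f_def fun_eq_iff)
    show ?thesis unfolding eq integral_restrict_UNIV using True by simp
  next
    case False
    then have eq: "(\<lambda>y. f (x,y)) = (\<lambda>y. 0)"
      using supp supp' by (metis atLeastAtMost_iff min.bounded_iff)
    show ?thesis unfolding eq using False by (subst if_not_P) simp_all
  qed
  have sec2: "integral UNIV (\<lambda>x. f (x,y)) = (if y \<in> {-1..min h2 1} then integral {-sq y..min h1 (sq y)} (\<lambda>x. wt i y x) else 0)" for y
  proof (cases "y \<in> {-1..min h2 1}")
    case True
    then have eq: "(\<lambda>x. f (x,y)) = (\<lambda>x. if x \<in> {-sq y..min h1 (sq y)} then wt i y x else 0)"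
      using disk_iff[of y] by (auto simp: f_def fun_eq_iff wt_sym add.commute)
    show ?thesis unfolding eq integral_restrict_UNIV using True by simp
  next
    case False
    then have eq: "(\<lambda>x. f (x,y)) = (\<lambda>x. 0)"
      using supp supp' by (metis atLeastAtMost_iff min.bounded_iff)
    show ?thesis unfolding eq using False by (subst if_not_P) simp_all
  qed
  show "C i h1 h2 = G i h1 h2"
  proof -
    have "C i h1 h2 = integral UNIV (\<lambda>x. integral UNIV (\<lambda>y. f (x,y)))" using C1 fubini_box(1)[OF meas bnd supp] by simp
    also have "\<dots> = integral UNIV (\<lambda>x. if x \<in> {-1..min h1 1} then integral {-sq x..min h2 (sq x)} (\<lambda>y. wt i x y) else 0)"
      unfolding sec1 ..
    also have "\<dots> = G i h1 h2" unfolding G_def by (rule integral_restrict_UNIV)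
    finally show ?thesis .
  qed
  have "(\<lambda>x. if x \<in> {-1..min h1 1} then integral {-sq x..min h2 (sq x)} (\<lambda>y. wt i x y) else 0) integrable_on UNIV"
    using fubini_box(3)[OF meas bnd supp] unfolding sec1 .
  then show "(\<lambda>x. integral {-sq x..min h2 (sq x)} (\<lambda>y. wt i x y)) integrable_on {-1..min h1 1}"
    by (simp only: integrable_restrict_UNIV)
  show "C i h1 h2 = G i h2 h1"
  proof -
    have "C i h1 h2 = integral UNIV (\<lambda>y. integral UNIV (\<lambda>x. f (x,y)))" using C1 fubini_box(2)[OF meas bnd supp] by simp
    also have "\<dots> = integral UNIV (\<lambda>y. if y \<in> {-1..min h2 1} then integral {-sq y..min h1 (sq y)} (\<lambda>x. wt i y x) else 0)"
      unfolding sec2 ..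
    also have "\<dots> = G i h2 h1" unfolding G_def by (rule integral_restrict_UNIV)
    finally show ?thesis .
  qed
qed

definition Phi :: "nat \<Rightarrow> real \<Rightarrow> real \<Rightarrow> real" where
  "Phi i x y = (if i = 0 then y else (y * sqrt (x\<^sup>2 + y\<^sup>2) + x\<^sup>2 * arsinh (y / \<bar>x\<bar>)) / 2)"

lemma arsinh_chain[derivative_intros]:
  assumes "(f has_real_derivative f') (at x within T)"
  shows "((\<lambda>x. arsinh (f x)) has_real_derivative (f' / sqrt ((f x)\<^sup>2 + 1))) (at x within T)"
  using DERIV_chain2[OF arsinh_real_has_field_derivative assms(1)] by simp

lemma sqrt_ratio: assumes "u \<noteq> 0" shows "sqrt ((v / \<bar>u\<bar>)\<^sup>2 + 1) = sqrt (u\<^sup>2 + v\<^sup>2) / \<bar>u\<bar>"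
proof -
  have "(v / \<bar>u\<bar>)\<^sup>2 + 1 = (u\<^sup>2 + v\<^sup>2) / \<bar>u\<bar>\<^sup>2" using assms by (simp add: field_simps power2_eq_square)
  then show ?thesis by (simp add: real_sqrt_divide)
qed

lemma Phi_deriv:
  assumes "i = 0 \<or> x \<noteq> 0"
  shows "(Phi i x has_real_derivative wt i x y) (at y)"
proof (cases "i = 0")
  case True
  then show ?thesis unfolding Phi_def wt_def by (auto intro!: derivative_eq_intros)
next
  case False
  with assms have x: "x \<noteq> 0" by auto
  have r: "x\<^sup>2 + y\<^sup>2 > 0" using x by (simp add: add_pos_nonneg)
  have s: "sqrt (x\<^sup>2 + y\<^sup>2) > 0" using r by simp
  have s2: "(sqrt (x\<^sup>2 + y\<^sup>2))\<^sup>2 = x\<^sup>2 + y\<^sup>2" using r by simp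
  have "((\<lambda>y. (y * sqrt (x\<^sup>2 + y\<^sup>2) + x\<^sup>2 * arsinh (y / \<bar>x\<bar>)) / 2) has_real_derivative sqrt (x\<^sup>2 + y\<^sup>2)) (at y)"
    using r x apply (auto intro!: derivative_eq_intros)
    unfolding sqrt_ratio[OF x] using s s2 x
    apply (simp add: field_simps power2_eq_square)
    done
  then show ?thesis using False unfolding Phi_def wt_def by (simp add: fun_eq_iff)
qed

lemma ftc_gen:
  fixes F f :: "real \<Rightarrow> real"
  assumes "finite S" "a \<le> b" "continuous_on {a..b} F"
    "\<And>x. x \<in> {a<..<b} - S \<Longrightarrow> (F has_real_derivative f x) (at x)"
  shows "(f has_integral F b - F a) {a..b}" and "integral {a..b} f = F b - F a"
proof -
  show "(f has_integral F b - F a) {a..b}"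
    by (rule fundamental_theorem_of_calculus_interior_strong[OF assms(1,2)])
       (use assms(3,4) in \<open>auto simp: has_real_derivative_iff_has_vector_derivative\<close>)
  then show "integral {a..b} f = F b - F a" by (rule integral_unique)
qed

lemma cont_from_deriv:
  assumes "\<And>x. (F has_real_derivative f x) (at x)"
  shows "continuous_on T F"
  by (meson DERIV_isCont assms continuous_at_imp_continuous_on)

lemma oint_ftc:
  fixes F f :: "real \<Rightarrow> real"
  assumes "finite S" "continuous_on UNIV F" "\<And>x. x \<notin> S \<Longrightarrow> (F has_real_derivative f x) (at x)"
  shows "oint a b f = F b - F a"
proof (cases "a \<le> b")
  case True
  have "integral {a..b} f = F b - F a"
    by (rule ftc_gen(2)[OF assms(1) True]) (use assms(2,3) in \<open>auto intro: continuous_on_subset\<close>)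
  then show ?thesis using True by (simp add: oint_def)
next
  case False
  have "integral {b..a} f = F a - F b"
    by (rule ftc_gen(2)[OF assms(1)]) (use assms(2,3) False in \<open>auto intro: continuous_on_subset\<close>)
  then show ?thesis using False by (simp add: oint_def)
qed

lemma inner_int:
  assumes "i = 0 \<or> x \<noteq> 0" "c \<le> d"
  shows "integral {c..d} (wt i x) = Phi i x d - Phi i x c"
  by (rule ftc_gen(2)[of "{}"]) (use assms Phi_deriv[OF assms(1)] in \<open>auto intro: cont_from_deriv\<close>)

lemma abs3_deriv:
  fixes x :: real
  assumes "x \<noteq> 0"
  shows "((\<lambda>x. \<bar>x\<bar>^3) has_real_derivative 3 * x * \<bar>x\<bar>) (at x)"
proof (cases "x > 0")
  case True
  have "((\<lambda>x. x^3) has_real_derivative 3 * x * \<bar>x\<bar>) (at x)"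
    using True by (auto intro!: derivative_eq_intros simp: power2_eq_square)
  then show ?thesis
    by (rule has_field_derivative_transform_within_open[where S="{0<..}"]) (use True in auto)
next
  case False
  with assms have n: "x < 0" by auto
  have "((\<lambda>x. - (x^3)) has_real_derivative 3 * x * \<bar>x\<bar>) (at x)"
    using n by (auto intro!: derivative_eq_intros simp: power2_eq_square)
  then show ?thesis
    by (rule has_field_derivative_transform_within_open[where S="{..<0}"]) (use n in auto)
qed

definition Af :: "nat \<Rightarrow> real \<Rightarrow> real \<Rightarrow> real" where
  "Af i a b = (if i = 0 then a * b / 2 else (a * b * sqrt (a\<^sup>2 + b\<^sup>2) + \<bar>a\<bar>^3 * arsinh (b / a)) / 6)"

lemma Phi_line:
  fixes a b x :: real
  assumes "a \<noteq> 0"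
  shows "Phi 1 x (b * x / a) = x * \<bar>x\<bar> * (((b/a) * sqrt ((b/a)\<^sup>2 + 1) + arsinh (b/a)) / 2)"
proof (cases "x = 0")
  case True then show ?thesis by (simp add: Phi_def)
next
  case False
  have e1: "sqrt (x\<^sup>2 + (b * x / a)\<^sup>2) = \<bar>x\<bar> * sqrt ((b/a)\<^sup>2 + 1)"
  proof -
    have "x\<^sup>2 + (b * x / a)\<^sup>2 = x\<^sup>2 * ((b/a)\<^sup>2 + 1)" by (simp add: field_simps power2_eq_square)
    then show ?thesis by (simp add: real_sqrt_mult)
  qed
  have e2: "x\<^sup>2 * arsinh (b * x / a / \<bar>x\<bar>) = x * \<bar>x\<bar> * arsinh (b / a)"
  proof (cases "x > 0")
    case True then show ?thesis by (simp add: power2_eq_square)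
  next
    case False
    with \<open>x \<noteq> 0\<close> have "x < 0" by auto
    then have "b * x / a / \<bar>x\<bar> = - (b / a)" by (simp add: field_simps)
    then show ?thesis using \<open>x < 0\<close> by (simp add: power2_eq_square)
  qed
  show ?thesis unfolding Phi_def using e1 e2 by (simp add: field_simps)
qed

lemma A_eq:
  assumes "i \<in> {0, 1}"
  shows "A i a b = Af i a b"
proof (cases "a = 0")
  case True then show ?thesis by (simp add: A_def Af_def)
next
  case a: False
  show ?thesis
  proof (cases "i = 0")
    case True
    have inner: "oint 0 (b * x / a) (wt 0 x) = b * x / a" for x
      by (subst oint_ftc[of "{}" "\<lambda>y. y"]) (auto simp: True wt_def intro!: derivative_eq_intros continuous_intros)
    have "oint 0 a (\<lambda>x. b * x / a) = a * b / 2"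
      by (subst oint_ftc[of "{}" "\<lambda>x. b * x\<^sup>2 / (2 * a)"]) (use a in \<open>auto intro!: derivative_eq_intros continuous_intros simp: power2_eq_square\<close>)
    then show ?thesis using a True by (simp add: A_def Af_def inner)
  next
    case False
    with assms have i: "i = 1" by auto
    define K where "K = ((b/a) * sqrt ((b/a)\<^sup>2 + 1) + arsinh (b/a)) / 2"
    have inner: "oint 0 (b * x / a) (\<lambda>y. wt i x y) = x * \<bar>x\<bar> * K" for x
    proof (cases "x = 0")
      case True then show ?thesis by (simp add: oint_def)
    next
      case False
      have "oint 0 (b * x / a) (\<lambda>y. wt i x y) = Phi 1 x (b * x / a) - Phi 1 x 0"
        by (rule oint_ftc[of "{}"]) (use Phi_deriv[of 1 x] False i in \<open>auto intro: cont_from_deriv\<close>)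
      moreover have "Phi 1 x 0 = 0" by (simp add: Phi_def)
      ultimately show ?thesis using Phi_line[OF a, of x b] by (simp add: K_def)
    qed
    have "oint 0 a (\<lambda>x. x * \<bar>x\<bar> * K) = \<bar>a\<bar>^3 / 3 * K - \<bar>0\<bar>^3 / 3 * K"
      apply (rule oint_ftc[of "{0}"])
        apply simp
       apply (auto intro!: continuous_intros)[1]
    proof -
      fix x :: real assume "x \<notin> {0}"
      then have "x \<noteq> 0" by simp
      from DERIV_cmult_right[OF DERIV_cdivide[OF abs3_deriv[OF this], of 3], of K]
      show "((\<lambda>a. \<bar>a\<bar> ^ 3 / 3 * K) has_real_derivative x * \<bar>x\<bar> * K) (at x)" by simp
    qed
    then have o: "oint 0 a (\<lambda>x. x * \<bar>x\<bar> * K) = \<bar>a\<bar>^3 / 3 * K" by simp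
    have f: "\<bar>a\<bar>^3 * ((b/a) * sqrt ((b/a)\<^sup>2 + 1)) = a * b * sqrt (a\<^sup>2 + b\<^sup>2)"
    proof -
      have "sqrt ((b/a)\<^sup>2 + 1) = sqrt (a\<^sup>2 + b\<^sup>2) / \<bar>a\<bar>"
        using sqrt_ratio[OF a, of b] by (simp add: power_divide)
      then show ?thesis using a by (simp add: field_simps power2_eq_square power3_eq_cube)
    qed
    have "A i a b = oint 0 a (\<lambda>x. x * \<bar>x\<bar> * K)"
      unfolding A_def if_not_P[OF a] inner ..
    also have "\<dots> = \<bar>a\<bar>^3 / 3 * K" by (rule o)
    also have "\<dots> = (\<bar>a\<bar>^3 * ((b/a) * sqrt ((b/a)\<^sup>2 + 1)) + \<bar>a\<bar>^3 * arsinh (b/a)) / 6"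
      unfolding K_def by (simp add: field_simps)
    also have "\<dots> = Af i a b" unfolding f using i by (simp add: Af_def)
    finally show ?thesis .
  qed
qed

lemma arsinh_bound: "\<bar>arsinh (t::real)\<bar> \<le> 2 * \<bar>t\<bar>"
proof -
  have pos: "arsinh u \<le> 2 * u" if "u \<ge> 0" for u :: real
  proof -
    have "sqrt (u\<^sup>2 + 1) \<le> sqrt ((u + 1)\<^sup>2)"
      by (subst real_sqrt_le_iff) (use that in \<open>simp add: power2_eq_square algebra_simps\<close>)
    then have "sqrt (u\<^sup>2 + 1) \<le> u + 1" using that by simp
    moreover have "ln (u + sqrt (u\<^sup>2 + 1)) \<le> u + sqrt (u\<^sup>2 + 1) - 1"
      by (rule ln_le_minus_one[OF arsinh_real_aux])
    ultimately show ?thesis unfolding arsinh_real_def by linarith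
  qed
  show ?thesis
  proof (cases "t \<ge> 0")
    case True
    have "arsinh t \<ge> 0"
    proof (cases "t = 0")
      case False
      then have "t > 0" using True by simp
      then have "arsinh t > 0" by simp
      then show ?thesis by linarith
    qed simp
    then show ?thesis using pos[of t] True by simp
  next
    case False
    then have "t < 0" by simp
    then have "arsinh t < 0" by simp
    then have a: "\<bar>arsinh t\<bar> = - arsinh t" by (rule abs_of_neg)
    have "- arsinh t \<le> 2 * (- t)" using pos[of "-t"] \<open>t < 0\<close> by simp
    then show ?thesis unfolding a using \<open>t < 0\<close> by simp
  qed
qed

lemma isCont_E:
  fixes f g :: "real \<Rightarrow> real"
  assumes f: "isCont f y" and g: "isCont g y"
  shows "isCont (\<lambda>y. \<bar>f y\<bar>^3 * arsinh (g y / f y)) y"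
proof (cases "f y = 0")
  case False
  then show ?thesis using f g by (auto intro!: continuous_intros)
next
  case True
  have "((\<lambda>y. \<bar>f y\<bar>^3 * arsinh (g y / f y)) \<longlongrightarrow> 0) (at y)"
  proof (rule Lim_null_comparison)
    show "\<forall>\<^sub>F x in at y. norm (\<bar>f x\<bar>^3 * arsinh (g x / f x)) \<le> 2 * (f x)\<^sup>2 * \<bar>g x\<bar>"
    proof (rule always_eventually, rule allI)
      fix x :: real
      have "norm (\<bar>f x\<bar>^3 * arsinh (g x / f x)) = \<bar>f x\<bar>^3 * \<bar>arsinh (g x / f x)\<bar>" by (simp add: abs_mult)
      also have "\<dots> \<le> \<bar>f x\<bar>^3 * (2 * \<bar>g x / f x\<bar>)" by (intro mult_left_mono arsinh_bound) auto
      also have "\<dots> = 2 * (f x)\<^sup>2 * \<bar>g x\<bar>"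
        by (cases "f x = 0") (auto simp: abs_divide power2_eq_square power3_eq_cube)
      finally show "norm (\<bar>f x\<bar>^3 * arsinh (g x / f x)) \<le> 2 * (f x)\<^sup>2 * \<bar>g x\<bar>" .
    qed
    have "((\<lambda>x. 2 * (f x)\<^sup>2 * \<bar>g x\<bar>) \<longlongrightarrow> 2 * (f y)\<^sup>2 * \<bar>g y\<bar>) (at y)"
      using f g by (intro tendsto_intros) (auto simp: isCont_def)
    then show "((\<lambda>x. 2 * (f x)\<^sup>2 * \<bar>g x\<bar>) \<longlongrightarrow> 0) (at y)" using True by simp
  qed
  then show ?thesis using True by (simp add: isCont_def)
qed

lemma isCont_Af:
  fixes f g :: "real \<Rightarrow> real"
  assumes "isCont f y" "isCont g y"
  shows "isCont (\<lambda>y. Af i (f y) (g y)) y"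
  unfolding Af_def using assms isCont_E[OF assms]
  by (cases "i = 0") (auto intro!: continuous_intros)

lemma cont_Af:
  fixes f g :: "real \<Rightarrow> real"
  assumes "continuous_on UNIV f" "continuous_on UNIV g"
  shows "continuous_on T (\<lambda>y. Af i (f y) (g y))"
  using assms by (intro continuous_at_imp_continuous_on ballI isCont_Af) (auto simp: continuous_on_eq_continuous_at)

definition P :: "nat \<Rightarrow> real \<Rightarrow> real" where
  "P i x = (3 - real i) / 6 * arcsin x + Af i x (sq x)"

lemma P1_pos_deriv:
  fixes x :: real
  assumes "0 < x" "x < 1"
  shows "((\<lambda>x. 1/3 * arcsin x + (x * sqrt (1 - x\<^sup>2) + x^3 * arsinh (sqrt (1 - x\<^sup>2) / x)) / 6)
     has_real_derivative (sqrt (1 - x\<^sup>2) + x\<^sup>2 * arsinh (sqrt (1 - x\<^sup>2) / x)) / 2) (at x)"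
proof -
  have "\<bar>x\<bar> < 1" using assms by auto
  then have q: "1 - x\<^sup>2 > 0" by (simp add: abs_square_less_1)
  define s where "s = sqrt (1 - x\<^sup>2)"
  have s: "s > 0" "s\<^sup>2 = 1 - x\<^sup>2" using q by (auto simp: s_def)
  have h: "sqrt ((s / x)\<^sup>2 + 1) = 1 / x"
  proof -
    have "(s / x)\<^sup>2 + 1 = (1 / x)\<^sup>2" using s assms by (simp add: field_simps power2_eq_square)
    then show ?thesis using assms by simp
  qed
  show ?thesis
    using q assms unfolding s_def[symmetric]
    apply (auto intro!: derivative_eq_intros)
    unfolding s_def[symmetric] h
    using s assms apply (simp add: field_simps power2_eq_square power3_eq_cube)
    apply algebra
    done
qed

lemma P1_neg_deriv:
  fixes x :: real
  assumes "-1 < x" "x < 0"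
  shows "((\<lambda>x. 1/3 * arcsin x + (x * sqrt (1 - x\<^sup>2) - x^3 * arsinh (sqrt (1 - x\<^sup>2) / x)) / 6)
     has_real_derivative (sqrt (1 - x\<^sup>2) - x\<^sup>2 * arsinh (sqrt (1 - x\<^sup>2) / x)) / 2) (at x)"
proof -
  have "\<bar>x\<bar> < 1" using assms by auto
  then have q: "1 - x\<^sup>2 > 0" by (simp add: abs_square_less_1)
  define s where "s = sqrt (1 - x\<^sup>2)"
  have s: "s > 0" "s\<^sup>2 = 1 - x\<^sup>2" using q by (auto simp: s_def)
  have h: "sqrt ((s / x)\<^sup>2 + 1) = - 1 / x"
  proof -
    have "(s / x)\<^sup>2 + 1 = (- 1 / x)\<^sup>2" using s assms by (simp add: field_simps power2_eq_square)
    then show ?thesis using assms by simp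
  qed
  show ?thesis
    using q assms unfolding s_def[symmetric]
    apply (auto intro!: derivative_eq_intros)
    unfolding s_def[symmetric] h
    using s assms apply (simp add: field_simps power2_eq_square power3_eq_cube)
    apply algebra
    done
qed

lemma P0_deriv:
  fixes x :: real
  assumes "-1 < x" "x < 1"
  shows "((\<lambda>x. 1/2 * arcsin x + x * sqrt (1 - x\<^sup>2) / 2) has_real_derivative sqrt (1 - x\<^sup>2)) (at x)"
proof -
  have "\<bar>x\<bar> < 1" using assms by auto
  then have q: "1 - x\<^sup>2 > 0" by (simp add: abs_square_less_1)
  define s where "s = sqrt (1 - x\<^sup>2)"
  have s: "s > 0" "s\<^sup>2 = 1 - x\<^sup>2" using q by (auto simp: s_def)
  show ?thesis
    using q assms
    apply (auto intro!: derivative_eq_intros)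
    unfolding s_def[symmetric]
    using s assms apply (simp add: field_simps power2_eq_square power3_eq_cube)
    done
qed

lemma sq_facts:
  assumes "\<bar>y\<bar> \<le> 1"
  shows "(sq y)\<^sup>2 = 1 - y\<^sup>2" "sqrt (y\<^sup>2 + (sq y)\<^sup>2) = 1" "sq y \<ge> 0"
proof -
  have "y\<^sup>2 \<le> 1" using assms by (simp add: abs_square_le_1)
  then show "(sq y)\<^sup>2 = 1 - y\<^sup>2" "sq y \<ge> 0" by (auto simp: sq_def)
  then show "sqrt (y\<^sup>2 + (sq y)\<^sup>2) = 1" by simp
qed

lemma P_deriv:
  assumes "-1 < x" "x < 1" "x \<noteq> 0" "i \<in> {0, 1}"
  shows "(P i has_real_derivative Phi i x (sq x)) (at x)"
proof -
  consider "i = 0" | "i = 1" "x > 0" | "i = 1" "x < 0" using assms by force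
  then show ?thesis
  proof cases
    case 1
    have "(P i has_real_derivative sqrt (1 - x\<^sup>2)) (at x)"
      by (rule has_field_derivative_transform_within_open[OF P0_deriv[OF assms(1,2)], where S="{-1<..<1}"])
         (use assms 1 in \<open>auto simp: P_def Af_def sq_def\<close>)
    then show ?thesis using 1 by (simp add: Phi_def sq_def)
  next
    case 2
    have "(P i has_real_derivative (sqrt (1 - x\<^sup>2) + x\<^sup>2 * arsinh (sqrt (1 - x\<^sup>2) / x)) / 2) (at x)"
    proof (rule has_field_derivative_transform_within_open[OF P1_pos_deriv[OF 2(2) assms(2)], where S="{0<..<1}"])
      fix y :: real assume y: "y \<in> {0<..<1}"
      then have "\<bar>y\<bar> \<le> 1" by auto
      from sq_facts[OF this] y show "1/3 * arcsin y + (y * sqrt (1 - y\<^sup>2) + y^3 * arsinh (sqrt (1 - y\<^sup>2) / y)) / 6 = P i y"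
        using 2 by (simp add: P_def Af_def sq_def[symmetric])
    qed (use 2 assms in auto)
    then show ?thesis using 2 sq_facts[of x] assms by (simp add: Phi_def sq_def[symmetric])
  next
    case 3
    have "(P i has_real_derivative (sqrt (1 - x\<^sup>2) - x\<^sup>2 * arsinh (sqrt (1 - x\<^sup>2) / x)) / 2) (at x)"
    proof (rule has_field_derivative_transform_within_open[OF P1_neg_deriv[OF assms(1) 3(2)], where S="{-1<..<0}"])
      fix y :: real assume y: "y \<in> {-1<..<0}"
      then have "\<bar>y\<bar> \<le> 1" by auto
      from sq_facts[OF this] y show "1/3 * arcsin y + (y * sqrt (1 - y\<^sup>2) - y^3 * arsinh (sqrt (1 - y\<^sup>2) / y)) / 6 = P i y"
        using 3 by (simp add: P_def Af_def sq_def[symmetric])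
    qed (use 3 assms in auto)
    moreover have "arsinh (sq x / \<bar>x\<bar>) = - arsinh (sq x / x)" using 3 by simp
    ultimately show ?thesis using 3 sq_facts[of x] assms by (simp add: Phi_def sq_def[symmetric])
  qed
qed

lemma close1: "(D::real) > 0 \<Longrightarrow> X * D + N = R * D \<Longrightarrow> X + N / D = R"
  by (simp add: field_simps)

lemma Q1_pos_deriv:
  fixes y c :: real
  assumes "0 < y" "c \<noteq> 0"
  shows "((\<lambda>y. (c * y * sqrt (c\<^sup>2 + y\<^sup>2) + \<bar>c\<bar>^3 * arsinh (y / c)) / 6 + (y * c * sqrt (y\<^sup>2 + c\<^sup>2) + y^3 * arsinh (c / y)) / 6)
     has_real_derivative (c * sqrt (y\<^sup>2 + c\<^sup>2) + y\<^sup>2 * arsinh (c / y)) / 2) (at y)"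
proof -
  have q: "c\<^sup>2 + y\<^sup>2 > 0" using assms by (simp add: add_pos_pos)
  define r where "r = sqrt (c\<^sup>2 + y\<^sup>2)"
  have r: "r > 0" "r\<^sup>2 = c\<^sup>2 + y\<^sup>2" "sqrt (y\<^sup>2 + c\<^sup>2) = r" using q by (auto simp: r_def add.commute)
  have h1: "sqrt ((y / c)\<^sup>2 + 1) = r / \<bar>c\<bar>"
  proof -
    have "(y / c)\<^sup>2 + 1 = (r / \<bar>c\<bar>)\<^sup>2" using r assms by (simp add: field_simps power2_eq_square)
    then show ?thesis using assms r by simp
  qed
  have h2: "sqrt ((c / y)\<^sup>2 + 1) = r / y"
  proof -
    have "(c / y)\<^sup>2 + 1 = (r / y)\<^sup>2" using r assms by (simp add: field_simps power2_eq_square)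
    then show ?thesis using assms r by simp
  qed
  have ac: "\<bar>c\<bar> * \<bar>c\<bar> = c * c" by (simp add: abs_mult_self_eq)
  have den: "0 < c * (c * (r * 1296)) + r * (y * (y * 1296))"
  proof -
    have "c * (c * (r * 1296)) + r * (y * (y * 1296)) = 1296 * r * (c\<^sup>2 + y\<^sup>2)"
      by (simp add: algebra_simps power2_eq_square)
    then show ?thesis using r q by simp
  qed
  show ?thesis
    using q assms
    apply (auto intro!: derivative_eq_intros)
    unfolding r_def[symmetric] r(3) h1 h2
    using r assms ac apply (simp add: field_simps power2_eq_square power3_eq_cube)
    apply (subst divide_eq_eq)
    using den apply (simp only: if_True less_imp_neq[symmetric] not_False_eq_True)
    apply (insert ac)
    apply algebra
    done
qed

lemma Q1_neg_deriv:
  fixes y c :: real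
  assumes "y < 0" "c \<noteq> 0"
  shows "((\<lambda>y. (c * y * sqrt (c\<^sup>2 + y\<^sup>2) + \<bar>c\<bar>^3 * arsinh (y / c)) / 6 + (y * c * sqrt (y\<^sup>2 + c\<^sup>2) - y^3 * arsinh (c / y)) / 6)
     has_real_derivative (c * sqrt (y\<^sup>2 + c\<^sup>2) - y\<^sup>2 * arsinh (c / y)) / 2) (at y)"
proof -
  have q: "c\<^sup>2 + y\<^sup>2 > 0" using assms by (simp add: add_pos_pos)
  define r where "r = sqrt (c\<^sup>2 + y\<^sup>2)"
  have r: "r > 0" "r\<^sup>2 = c\<^sup>2 + y\<^sup>2" "sqrt (y\<^sup>2 + c\<^sup>2) = r" using q by (auto simp: r_def add.commute)
  have h1: "sqrt ((y / c)\<^sup>2 + 1) = r / \<bar>c\<bar>"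
  proof -
    have "(y / c)\<^sup>2 + 1 = (r / \<bar>c\<bar>)\<^sup>2" using r assms by (simp add: field_simps power2_eq_square)
    then show ?thesis using assms r by simp
  qed
  have h2: "sqrt ((c / y)\<^sup>2 + 1) = - r / y"
  proof -
    have "(c / y)\<^sup>2 + 1 = (- r / y)\<^sup>2" using r assms by (simp add: field_simps power2_eq_square)
    then show ?thesis using assms r by simp
  qed
  have ac: "\<bar>c\<bar> * \<bar>c\<bar> = c * c" by (simp add: abs_mult_self_eq)
  have den: "0 < c * (c * (r * 1296)) + r * (y * (y * 1296))"
  proof -
    have "c * (c * (r * 1296)) + r * (y * (y * 1296)) = 1296 * r * (c\<^sup>2 + y\<^sup>2)"
      by (simp add: algebra_simps power2_eq_square)
    then show ?thesis using r q by simp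
  qed
  show ?thesis
    using q assms
    apply (auto intro!: derivative_eq_intros)
    unfolding r_def[symmetric] r(3) h1 h2
    using r assms ac apply (simp add: field_simps power2_eq_square power3_eq_cube)
    apply (rule close1[OF den])
    apply (insert ac r(2))
    apply algebra
    done
qed

lemma Q_deriv:
  assumes "y \<noteq> 0" "i \<in> {0, 1}"
  shows "((\<lambda>y. Af i c y + Af i y c) has_real_derivative Phi i y c) (at y)"
proof -
  consider "i = 0" | "i = 1" "c = 0" | "i = 1" "c \<noteq> 0" "y > 0" | "i = 1" "c \<noteq> 0" "y < 0"
    using assms by force
  then show ?thesis
  proof cases
    case 1
    then show ?thesis by (auto simp: Af_def Phi_def intro!: derivative_eq_intros)
  next
    case 2
    have "(\<lambda>y. Af i c y + Af i y c) = (\<lambda>y. 0)" using 2 by (simp add: Af_def fun_eq_iff)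
    moreover have "Phi i y c = 0" using 2 by (simp add: Phi_def)
    ultimately show ?thesis by simp
  next
    case 3
    have "((\<lambda>y. Af i c y + Af i y c) has_real_derivative (c * sqrt (y\<^sup>2 + c\<^sup>2) + y\<^sup>2 * arsinh (c / y)) / 2) (at y)"
      by (rule has_field_derivative_transform_within_open[OF Q1_pos_deriv[OF 3(3,2)], where S="{0<..}"])
         (use 3 in \<open>auto simp: Af_def\<close>)
    then show ?thesis using 3 by (simp add: Phi_def)
  next
    case 4
    have "((\<lambda>y. Af i c y + Af i y c) has_real_derivative (c * sqrt (y\<^sup>2 + c\<^sup>2) - y\<^sup>2 * arsinh (c / y)) / 2) (at y)"
      by (rule has_field_derivative_transform_within_open[OF Q1_neg_deriv[OF 4(3,2)], where S="{..<0}"])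
         (use 4 in \<open>auto simp: Af_def\<close>)
    moreover have "arsinh (c / \<bar>y\<bar>) = - arsinh (c / y)" using 4 by simp
    ultimately show ?thesis using 4 by (simp add: Phi_def)
  qed
qed

lemma Phi_odd: "Phi i x (-y) = - Phi i x y"
  by (simp add: Phi_def minus_divide_left[symmetric] algebra_simps)

lemma Phi_zero: "Phi i x 0 = 0"
  by (simp add: Phi_def)

lemma sq_cont: "continuous_on T sq"
  unfolding sq_def by (intro continuous_intros)

lemma P_cont:
  assumes "-1 \<le> a" "b \<le> 1"
  shows "continuous_on {a..b} (P i)"
proof -
  have "continuous_on {a..b} (\<lambda>x. Af i x (sq x))"
    by (rule cont_Af) (auto intro: sq_cont continuous_intros)
  moreover have "continuous_on {a..b} (\<lambda>x. arcsin x)"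
    using assms by (intro continuous_intros) auto
  ultimately show ?thesis unfolding P_def[abs_def] using assms by (intro continuous_intros) auto
qed

lemma P_vals: "P i 1 = (3 - real i) / 6 * (pi / 2)" "P i (-1) = - ((3 - real i) / 6 * (pi / 2))"
  by (auto simp: P_def Af_def sq_def)

lemma G_horiz:
  assumes "-1 \<le> h" "h \<le> 1" "i \<in> {0, 1}"
  shows "G i h 0 = P i h - P i (-1)"
proof -
  have "integral {-1..h} (\<lambda>x. integral {-sq x..min 0 (sq x)} (\<lambda>y. wt i x y)) = P i h - P i (-1)"
  proof (rule ftc_gen(2)[of "{0}"])
    show "continuous_on {-1..h} (P i)" using assms by (intro P_cont) auto
  next
    fix x assume x: "x \<in> {-1<..<h} - {0}"
    then have "\<bar>x\<bar> \<le> 1" using assms by auto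
    note sf = sq_facts[OF this]
    have "integral {-sq x..min 0 (sq x)} (\<lambda>y. wt i x y) = Phi i x (sq x)"
      using sf x inner_int[of i x "-sq x" 0] by (simp add: Phi_odd Phi_zero min_def)
    then show "(P i has_real_derivative integral {-sq x..min 0 (sq x)} (\<lambda>y. wt i x y)) (at x)"
      using P_deriv[of x i] x assms by auto
  qed (use assms in auto)
  then show ?thesis using assms by (simp add: G_def)
qed

lemma G_disk:
  assumes "i \<in> {0, 1}"
  shows "G i 1 2 = 2 * (P i 1 - P i (-1))"
proof -
  have "integral {-1..1} (\<lambda>x. integral {-sq x..min 2 (sq x)} (\<lambda>y. wt i x y)) = 2 * P i 1 - 2 * P i (-1)"
  proof (rule ftc_gen(2)[of "{0}" _ _ "\<lambda>x. 2 * P i x"])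
    show "continuous_on {-1..1} (\<lambda>x. 2 * P i x)" by (intro continuous_intros P_cont) auto
  next
    fix x :: real assume x: "x \<in> {-1<..<1} - {0}"
    then have "\<bar>x\<bar> \<le> 1" by auto
    note sf = sq_facts[OF this]
    have "sq x \<le> 1" unfolding sq_def by simp
    then have "integral {-sq x..min 2 (sq x)} (\<lambda>y. wt i x y) = 2 * Phi i x (sq x)"
      using sf x inner_int[of i x "-sq x" "sq x"] by (simp add: Phi_odd min_def)
    then show "((\<lambda>x. 2 * P i x) has_real_derivative integral {-sq x..min 2 (sq x)} (\<lambda>y. wt i x y)) (at x)"
      using DERIV_cmult[OF P_deriv[of x i], of 2] x assms by auto
  qed auto
  then show ?thesis by (simp add: G_def)
qed

lemma G_int:
  fixes i :: nat and a b :: real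
  shows "(\<lambda>x. integral {-sq x..min b (sq x)} (\<lambda>y. wt i x y)) integrable_on {-1..min a 1}"
  by (rule C_G(3))

lemma G_vert:
  assumes h: "h1\<^sup>2 + h2\<^sup>2 \<le> 1" and i: "i \<in> {0, 1}"
  defines "Q \<equiv> (\<lambda>y. P i y + (Af i h1 y + Af i y h1))"
  shows "G i h2 h1 = G i 0 h1 + (Q h2 - Q 0)"
proof -
  define g where "g = (\<lambda>y. integral {-sq y..min h1 (sq y)} (\<lambda>x. wt i y x))"
  have b1: "\<bar>h1\<bar> \<le> 1" using h abs_square_le_1[of h1] by (smt (verit) zero_le_power2)
  have b2: "\<bar>h2\<bar> \<le> 1" using h abs_square_le_1[of h2] by (smt (verit) zero_le_power2)
  have m2: "min h2 1 = h2" using b2 by simp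
  have int1: "g integrable_on {-1..h2}" using G_int[where a=h2 and b=h1 and i=i] unfolding m2 g_def .
  have int0: "g integrable_on {-1..0}" using G_int[where a=0 and b=h1 and i=i] by (simp add: g_def)
  have G2: "G i h2 h1 = integral {-1..h2} g" unfolding G_def g_def m2 ..
  have G0: "G i 0 h1 = integral {-1..0} g" by (simp add: G_def g_def)
  have der: "(Q has_real_derivative g y) (at y)" if y: "y \<noteq> 0" "y\<^sup>2 < h2\<^sup>2" for y
  proof -
    have yb: "\<bar>y\<bar> < 1"
    proof -
      have "y\<^sup>2 < 1" using y h by (smt (verit) zero_le_power2)
      then show ?thesis by (simp add: abs_square_less_1)
    qed
    then have yb': "\<bar>y\<bar> \<le> 1" by simp
    note sf = sq_facts[OF yb']
    have "h1\<^sup>2 \<le> (sq y)\<^sup>2" using sf(1) y h by linarith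
    then have hs: "\<bar>h1\<bar> \<le> sq y" using sf(3) by (metis abs_le_square_iff abs_of_nonneg)
    have mh: "min h1 (sq y) = h1" using hs by simp
    have lh: "-sq y \<le> h1" using hs by simp
    have "g y = Phi i y h1 - Phi i y (-sq y)"
      unfolding g_def mh using inner_int[of i y "-sq y" h1] y lh by simp
    then have gy: "g y = Phi i y (sq y) + Phi i y h1" by (simp add: Phi_odd)
    have "(Q has_real_derivative Phi i y (sq y) + Phi i y h1) (at y)"
      unfolding Q_def using P_deriv[of y i] Q_deriv[of y i h1] yb y i
      by (auto intro!: DERIV_add)
    then show ?thesis using gy by simp
  qed
  have Qc: "continuous_on {a..b} Q" if "-1 \<le> a" "b \<le> 1" for a b
  proof -
    have "continuous_on {a..b} (\<lambda>y. Af i h1 y)" by (rule cont_Af) (auto intro: continuous_intros)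
    moreover have "continuous_on {a..b} (\<lambda>y. Af i y h1)" by (rule cont_Af) (auto intro: continuous_intros)
    ultimately show ?thesis unfolding Q_def using P_cont[OF that, of i] by (intro continuous_intros)
  qed
  show ?thesis
  proof (cases "h2 \<ge> 0")
    case True
    have "integral {0..h2} g = Q h2 - Q 0"
    proof (rule ftc_gen(2)[of "{}"])
      show "continuous_on {0..h2} Q" using b2 by (intro Qc) auto
    next
      fix y assume "y \<in> {0<..<h2} - {}"
      then show "(Q has_real_derivative g y) (at y)"
        by (intro der) (auto intro!: power_strict_mono)
    qed (use True in auto)
    moreover have "integral {-1..0} g + integral {0..h2} g = integral {-1..h2} g"
      using Henstock_Kurzweil_Integration.integral_combine[where a="-1" and c=0 and b=h2 and f=g] True int1 by simp
    ultimately show ?thesis using G0 G2 by simp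
  next
    case False
    have "integral {h2..0} g = Q 0 - Q h2"
    proof (rule ftc_gen(2)[of "{}"])
      show "continuous_on {h2..0} Q" using b2 by (intro Qc) auto
    next
      fix y assume y: "y \<in> {h2<..<0} - {}"
      then have "(-y)\<^sup>2 < (-h2)\<^sup>2" by (intro power_strict_mono) auto
      then show "(Q has_real_derivative g y) (at y)"
        using y by (intro der) auto
    qed (use False in auto)
    moreover have "integral {-1..h2} g + integral {h2..0} g = integral {-1..0} g"
      using Henstock_Kurzweil_Integration.integral_combine[where a="-1" and c=h2 and b=0 and f=g] False b2 int0 by simp
    ultimately show ?thesis using G0 G2 by simp
  qed
qed

lemma B_C: "B i h = C i h 2"
proof -
  have "S1 h = S2 h 2"
    using disk_bound by (fastforce simp: S1_def S2_def add.commute)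
  then show ?thesis by (simp add: B_def C_def)
qed

lemma sq_lt:
  assumes "\<bar>x\<bar> \<le> 1" "1 - x\<^sup>2 < t\<^sup>2" "t \<ge> 0"
  shows "sq x < t"
proof -
  have "(sq x)\<^sup>2 < t\<^sup>2" using sq_facts(1)[OF assms(1)] assms(2) by simp
  then show ?thesis using assms(3) by (rule power2_less_imp_less)
qed

theorem lemma28:
  fixes i :: nat and h1 h2 :: real
  assumes "i \<in> {0, 1}"
  shows "C i h1 h2 =
    (if h1\<^sup>2 + h2\<^sup>2 > 1 \<and> h1 \<le> 0 \<and> h2 \<le> 0 then 0
     else if h1\<^sup>2 + h2\<^sup>2 > 1 \<and> h1 > 0 \<and> h2 \<le> 0 then B i h2
     else if h1\<^sup>2 + h2\<^sup>2 > 1 \<and> h1 \<le> 0 \<and> h2 > 0 then B i h1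
     else if h1\<^sup>2 + h2\<^sup>2 > 1 \<and> h1 > 0 \<and> h2 > 0
       then B i h1 + B i h2 - (3 - real i) / 3 * pi
     else (3 - real i) / 6 * (pi / 2 + arcsin h1 + arcsin h2)
       + A i h1 (sqrt (1 - h1\<^sup>2)) + A i h2 (sqrt (1 - h2\<^sup>2))
       + A i h1 h2 + A i h2 h1)"
proof -
  define g where "g = (\<lambda>b x. integral {-sq x..min b (sq x)} (\<lambda>y. wt i x y))"
  have Gg: "G i a b = integral {-1..min a 1} (g b)" for a b by (simp add: G_def g_def)
  have sq1: "sq x \<le> 1" for x unfolding sq_def by simp
  consider (L) "h1\<^sup>2 + h2\<^sup>2 \<le> 1"
    | (c1) "h1\<^sup>2 + h2\<^sup>2 > 1" "h1 \<le> 0" "h2 \<le> 0"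
    | (c2) "h1\<^sup>2 + h2\<^sup>2 > 1" "h1 > 0" "h2 \<le> 0"
    | (c3) "h1\<^sup>2 + h2\<^sup>2 > 1" "h1 \<le> 0" "h2 > 0"
    | (c4) "h1\<^sup>2 + h2\<^sup>2 > 1" "h1 > 0" "h2 > 0"
    by fastforce
  then show ?thesis
  proof cases
    case c1
    have "C i h1 h2 = integral {-1..min h1 1} (g h2)" using C_G(1) Gg by simp
    also have "\<dots> = integral {-1..min h1 1} (\<lambda>x. 0)"
    proof (rule integral_cong)
      fix x assume x: "x \<in> {-1..min h1 1}"
      then have xb: "\<bar>x\<bar> \<le> 1" using c1 by auto
      have "(-h1)\<^sup>2 \<le> (-x)\<^sup>2" using x c1 by (intro power_mono) auto
      then have "x\<^sup>2 \<ge> h1\<^sup>2" by simp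
      then have "sq x < - h2" using c1 xb by (intro sq_lt) auto
      then have "{-sq x..min h2 (sq x)} = {}" by auto
      then show "g h2 x = 0" by (simp add: g_def)
    qed
    finally show ?thesis using c1 by simp
  next
    case c2
    have "C i h1 h2 = integral {-1..min h2 1} (g h1)" using C_G(2) Gg by simp
    also have "\<dots> = integral {-1..min h2 1} (g 2)"
    proof (rule integral_cong)
      fix x assume x: "x \<in> {-1..min h2 1}"
      then have xb: "\<bar>x\<bar> \<le> 1" using c2 by auto
      have "(-h2)\<^sup>2 \<le> (-x)\<^sup>2" using x c2 by (intro power_mono) auto
      then have "x\<^sup>2 \<ge> h2\<^sup>2" by simp
      then have "sq x < h1" using c2 xb by (intro sq_lt) auto
      then show "g h1 x = g 2 x" using sq1[of x] by (simp add: g_def min_def)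
    qed
    also have "\<dots> = B i h2" using B_C C_G(1) Gg by simp
    finally show ?thesis using c2 by simp
  next
    case c3
    have "C i h1 h2 = integral {-1..min h1 1} (g h2)" using C_G(1) Gg by simp
    also have "\<dots> = integral {-1..min h1 1} (g 2)"
    proof (rule integral_cong)
      fix x assume x: "x \<in> {-1..min h1 1}"
      then have xb: "\<bar>x\<bar> \<le> 1" using c3 by auto
      have "(-h1)\<^sup>2 \<le> (-x)\<^sup>2" using x c3 by (intro power_mono) auto
      then have "x\<^sup>2 \<ge> h1\<^sup>2" by simp
      then have "sq x < h2" using c3 xb by (intro sq_lt) auto
      then show "g h2 x = g 2 x" using sq1[of x] by (simp add: g_def min_def)
    qed
    also have "\<dots> = B i h1" using B_C C_G(1) Gg by simp
    finally show ?thesis using c3 by simp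
  next
    case c4
    define m where "m = min h1 1"
    have m: "0 < m" "m \<le> 1" using c4 by (auto simp: m_def)
    have split: "G i 1 b = integral {-1..m} (g b) + integral {m..1} (g b)" for b
    proof -
      have "g b integrable_on {-1..1}" using G_int[where a=1 and b=b and i=i] by (simp add: g_def)
      then show ?thesis
        using Henstock_Kurzweil_Integration.integral_combine[where a="-1" and c=m and b=1 and f="g b"] m
        by (simp add: Gg)
    qed
    have eqJ: "integral {m..1} (g h2) = integral {m..1} (g 2)"
    proof (rule integral_cong)
      fix x assume x: "x \<in> {m..1}"
      then have xb: "\<bar>x\<bar> \<le> 1" using m by auto
      have "1 - x\<^sup>2 < h2\<^sup>2"
      proof (cases "h1 \<le> 1")
        case True
        then have "x \<ge> h1" using x by (simp add: m_def)
        then have "x\<^sup>2 \<ge> h1\<^sup>2" using c4 by (intro power_mono) auto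
        then show ?thesis using c4 by linarith
      next
        case False
        then have "x = 1" using x by (simp add: m_def)
        then show ?thesis using c4 by simp
      qed
      then have "sq x < h2" using c4 xb by (intro sq_lt) auto
      then show "g h2 x = g 2 x" using sq1[of x] by (simp add: g_def min_def)
    qed
    have "C i h1 h2 = integral {-1..m} (g h2)" using C_G(1) Gg by (simp add: m_def)
    moreover have "B i h1 = integral {-1..m} (g 2)" using B_C C_G(1) Gg by (simp add: m_def)
    moreover have "B i h2 = G i 1 h2" using B_C C_G(2) Gg by simp
    moreover have "G i 1 2 = (3 - real i) / 3 * pi"
      using G_disk[OF assms] P_vals by simp
    ultimately show ?thesis using c4 split[of h2] split[of 2] eqJ by simp
  next
    case L
    have b1: "\<bar>h1\<bar> \<le> 1" using L abs_square_le_1[of h1] by (smt (verit) zero_le_power2)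
    have b2: "\<bar>h2\<bar> \<le> 1" using L abs_square_le_1[of h2] by (smt (verit) zero_le_power2)
    have "C i h1 h2 = G i h2 h1" by (rule C_G(2))
    also have "\<dots> = G i 0 h1 + ((P i h2 + (Af i h1 h2 + Af i h2 h1)) - (P i 0 + (Af i h1 0 + Af i 0 h1)))"
      by (rule G_vert[OF L assms])
    also have "G i 0 h1 = G i h1 0" using C_G(1)[of i h1 0] C_G(2)[of i h1 0] by simp
    also have "\<dots> = P i h1 - P i (-1)" using b1 assms by (intro G_horiz) auto
    finally have "C i h1 h2 = P i h1 - P i (-1) + (P i h2 + (Af i h1 h2 + Af i h2 h1)) - (P i 0 + (Af i h1 0 + Af i 0 h1))"
      by simp
    moreover have "P i 0 + (Af i h1 0 + Af i 0 h1) = 0" by (simp add: P_def Af_def sq_def)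
    ultimately show ?thesis using L assms P_vals(2)[of i]
      apply (simp add: A_eq P_def sq_def algebra_simps)
      apply (simp add: field_simps)
      done
  qed
qed

end
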